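(* Let $n$ be a positive even integer and let $f$ be a real polynomial of degree $d\le 5$. Then the Abel equation $$x'=t^{n-1}x^2+f(t)x^3,\qquad t\in[-1,1],$$ has a center at $x=0$ if and only if $f$ is an odd polynomial (i.e. contains only odd powers of $t$).
   Context: The Abel equation $x'=g(t)x^2+f(t)x^3$ on $[-1,1]$ (with $x$ real) is said to have a center at $x=0$ if every solution $x(t)$ whose initial value $x(-1)$ is small enough in absolute value is defined on $[-1,1]$ and satisfies $x(-1)=x(1)$. *)

theory Defs
  imports Complex_Main "HOL-Computational_Algebra.Polynomial"
begin

definition abel_solution :: "(real \<Rightarrow> real) \<Rightarrow> (real \<Rightarrow> real) \<Rightarrow> (real \<Rightarrow> real) \<Rightarrow> bool" where
  "abel_solution g f x \<longleftrightarrow>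
     (\<forall>t\<in>{-1..1}. (x has_real_derivative (g t * (x t)^2 + f t * (x t)^3)) (at t within {-1..1}))"

definition abel_center :: "(real \<Rightarrow> real) \<Rightarrow> (real \<Rightarrow> real) \<Rightarrow> bool" where
  "abel_center g f \<longleftrightarrow>
     (\<exists>\<delta>>0. \<forall>x0. \<bar>x0\<bar> < \<delta> \<longrightarrow>
        (\<exists>x. abel_solution g f x \<and> x (-1) = x0) \<and>
        (\<forall>x. abel_solution g f x \<and> x (-1) = x0 \<longrightarrow> x 1 = x0))"

definition odd_poly :: "real poly \<Rightarrow> bool" where
  "odd_poly p \<longleftrightarrow> (\<forall>i. even i \<longrightarrow> coeff p i = 0)"

end

theory Submission
  imports Defs "HOL-Analysis.Analysis"
begin

lemma mvt_within:
  fixes e D :: "real \<Rightarrow> real"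
  assumes "a \<le> b" "\<And>t. t \<in> {a..b} \<Longrightarrow> (e has_real_derivative D t) (at t within {a..b})"
  shows "\<exists>z\<in>{a..b}. e b - e a = D z * (b - a)"
  using mvt_very_simple[of a b e "\<lambda>x. (*) (D x)"] assms
  by (auto simp: has_field_derivative_def)

lemma deriv_bound:
  fixes e D :: "real \<Rightarrow> real"
  assumes "a \<le> b" "\<And>t. t \<in> {a..b} \<Longrightarrow> (e has_real_derivative D t) (at t within {a..b})"
    and "\<And>t. t \<in> {a..b} \<Longrightarrow> \<bar>D t\<bar> \<le> B" and "t \<in> {a..b}"
  shows "\<bar>e t - e a\<bar> \<le> B * (t - a)"
proof -
  have "\<And>s. s \<in> {a..t} \<Longrightarrow> (e has_real_derivative D s) (at s within {a..t})"
  proof -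
    fix s assume "s \<in> {a..t}"
    then have "(e has_real_derivative D s) (at s within {a..b})" using assms(2,4) by auto
    moreover have "{a..t} \<subseteq> {a..b}" using assms(4) by auto
    ultimately show "(e has_real_derivative D s) (at s within {a..t})"
      by (rule has_field_derivative_subset)
  qed
  then obtain z where z: "z \<in> {a..t}" "e t - e a = D z * (t - a)"
    using mvt_within[of a t e D] assms(4) by auto
  have "\<bar>D z\<bar> \<le> B" using assms(3,4) z(1) by auto
  then show ?thesis using z assms(4) by (auto simp: abs_mult intro: mult_right_mono)
qed

lemma deriv_nonpos:
  fixes e D :: "real \<Rightarrow> real"
  assumes "a \<le> b" "\<And>t. t \<in> {a..b} \<Longrightarrow> (e has_real_derivative D t) (at t within {a..b})"
    and "\<And>t. t \<in> {a..b} \<Longrightarrow> D t \<le> 0"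
  shows "e b \<le> e a"
proof -
  obtain z where z: "z \<in> {a..b}" "e b - e a = D z * (b - a)"
    using mvt_within[OF assms(1,2)] by auto
  have "D z * (b - a) \<le> 0" using assms(1,3) z(1) by (simp add: mult_nonpos_nonneg)
  then show ?thesis using z by simp
qed

lemma cont_bound:
  fixes x :: "real \<Rightarrow> real"
  assumes "continuous_on {-1..1} x"
  obtains B where "B \<ge> 0" "\<And>s. s \<in> {-1..1} \<Longrightarrow> \<bar>x s\<bar> \<le> B"
proof -
  have "bounded (x ` {-1..1})"
    by (intro compact_imp_bounded compact_continuous_image assms) auto
  then obtain a where "\<forall>y\<in>x ` {-1..1}. \<bar>y\<bar> \<le> a" by (auto simp: bounded_real)
  then show ?thesis using that[of "max a 0"] by force
qed

lemma sol_cont: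
  assumes "abel_solution g f x"
  shows "continuous_on {-1..1} x"
  using assms unfolding abel_solution_def by (intro DERIV_continuous_on) auto

lemma abel_unique:
  fixes g f x z :: "real \<Rightarrow> real"
  assumes cg: "continuous_on {-1..1} g" and cf: "continuous_on {-1..1} f"
    and x: "abel_solution g f x" and z: "abel_solution g f z"
    and c: "c \<in> {-1..1}" "x c = z c" and t: "t \<in> {-1..1}"
  shows "x t = z t"
proof -
  obtain B1 where B1: "B1 \<ge> 0" "\<And>s. s \<in> {-1..1} \<Longrightarrow> \<bar>x s\<bar> \<le> B1"
    using cont_bound[OF sol_cont[OF x]] by blast
  obtain B2 where B2: "B2 \<ge> 0" "\<And>s. s \<in> {-1..1} \<Longrightarrow> \<bar>z s\<bar> \<le> B2"
    using cont_bound[OF sol_cont[OF z]] by blast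
  obtain B3 where B3: "B3 \<ge> 0" "\<And>s. s \<in> {-1..1} \<Longrightarrow> \<bar>g s\<bar> \<le> B3"
    using cont_bound[OF cg] by blast
  obtain B4 where B4: "B4 \<ge> 0" "\<And>s. s \<in> {-1..1} \<Longrightarrow> \<bar>f s\<bar> \<le> B4"
    using cont_bound[OF cf] by blast
  define B where "B = B1 + B2 + B3 + B4"
  have Bx: "\<bar>x s\<bar> \<le> B" "\<bar>z s\<bar> \<le> B" "\<bar>g s\<bar> \<le> B" "\<bar>f s\<bar> \<le> B" "B \<ge> 0"
    if "s \<in> {-1..1}" for s
    using B1 B2 B3 B4 that unfolding B_def by force+
  define w where "w s = x s - z s" for s
  define k where "k s = g s * (x s + z s) + f s * (x s ^ 2 + x s * z s + z s ^ 2)" for s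
  define L where "L = B * (2 * B) + B * (3 * B ^ 2)"
  have kb: "\<bar>k s\<bar> \<le> L" if s: "s \<in> {-1..1}" for s
  proof -
    note b = Bx[OF s]
    have 1: "\<bar>x s + z s\<bar> \<le> 2 * B" using b by linarith
    have "\<bar>x s ^ 2 + x s * z s + z s ^ 2\<bar> \<le> \<bar>x s\<bar>^2 + \<bar>x s\<bar> * \<bar>z s\<bar> + \<bar>z s\<bar>^2"
      by (simp add: abs_mult power_abs[symmetric] abs_triangle_ineq order_trans[OF abs_triangle_ineq] add_mono)
    also have "\<dots> \<le> B^2 + B * B + B^2"
      using b by (intro add_mono power_mono mult_mono) auto
    finally have 2: "\<bar>x s ^ 2 + x s * z s + z s ^ 2\<bar> \<le> 3 * B^2" by (simp add: power2_eq_square)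
    have "\<bar>k s\<bar> \<le> \<bar>g s\<bar> * \<bar>x s + z s\<bar> + \<bar>f s\<bar> * \<bar>x s ^ 2 + x s * z s + z s ^ 2\<bar>"
      unfolding k_def by (metis abs_mult abs_triangle_ineq)
    also have "\<dots> \<le> B * (2 * B) + B * (3 * B ^ 2)"
      using b 1 2 by (intro add_mono mult_mono) auto
    finally show ?thesis unfolding L_def .
  qed
  have L0: "L \<ge> 0" unfolding L_def using Bx(5)[OF t] by simp
  have wd: "(w has_real_derivative (w s * k s)) (at s within {-1..1})" if s: "s \<in> {-1..1}" for s
  proof -
    have "(w has_real_derivative ((g s * (x s)^2 + f s * (x s)^3) - (g s * (z s)^2 + f s * (z s)^3)))
        (at s within {-1..1})"
      unfolding w_def using x z s unfolding abel_solution_def by (intro DERIV_diff) auto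
    moreover have "(g s * (x s)^2 + f s * (x s)^3) - (g s * (z s)^2 + f s * (z s)^3) = w s * k s"
      unfolding w_def k_def by (simp add: algebra_simps power2_eq_square power3_eq_cube)
    ultimately show ?thesis by simp
  qed
  show ?thesis
  proof (cases "c \<le> t")
    case True
    define h where "h s = (w s)^2 * exp (- (2 *  L* s))" for s
    have hd: "(h has_real_derivative (2 * (w s)^2 * exp (- (2 *  L* s)) * (k s - L))) (at s within {c..t})"
      if s: "s \<in> {c..t}" for s
    proof -
      have s1: "s \<in> {-1..1}" using s c t by auto
      have "(w has_real_derivative (w s * k s)) (at s within {c..t})"
        using wd[OF s1] by (rule has_field_derivative_subset) (use c t in auto)
      then have "(h has_real_derivative (2 * w s * (w s * k s) * exp (- (2 *  L* s)) + (w s)^2 * (exp (- (2 *  L* s)) * (-2 *  L)))) (at s within {c..t})"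
        unfolding h_def by (auto intro!: derivative_eq_intros)
      then show ?thesis by (simp add: algebra_simps power2_eq_square)
    qed
    have "h t \<le> h c"
    proof (rule deriv_nonpos[OF True hd])
      fix s assume s: "s \<in> {c..t}"
      have "k s - L \<le> 0" using kb[of s] s c t by auto
      then show "2 * (w s)^2 * exp (- (2 *  L* s)) * (k s - L) \<le> 0"
        by (simp add: mult_nonneg_nonpos)
    qed auto
    moreover have "h c = 0" unfolding h_def w_def using c by simp
    ultimately have "(w t)^2 * exp (- (2 *  L* t)) \<le> 0" unfolding h_def by simp
    then have "(w t)^2 \<le> 0" by (simp add: mult_le_0_iff)
    then show ?thesis unfolding w_def by simp
  next
    case False
    then have ct: "t \<le> c" by simp
    define h where "h s = - ((w s)^2 * exp (2 *  L* s))" for s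
    have hd: "(h has_real_derivative (- (2 * (w s)^2 * exp (2 *  L* s) * (k s + L)))) (at s within {t..c})"
      if s: "s \<in> {t..c}" for s
    proof -
      have s1: "s \<in> {-1..1}" using s c t by auto
      have "(w has_real_derivative (w s * k s)) (at s within {t..c})"
        using wd[OF s1] by (rule has_field_derivative_subset) (use c t in auto)
      then have "(h has_real_derivative (- (2 * w s * (w s * k s) * exp (2 *  L* s) + (w s)^2 * (exp (2 *  L* s) * (2 *  L))))) (at s within {t..c})"
        unfolding h_def by (auto intro!: derivative_eq_intros)
      then show ?thesis by (simp add: algebra_simps power2_eq_square)
    qed
    have "h c \<le> h t"
    proof (rule deriv_nonpos[OF ct hd])
      fix s assume s: "s \<in> {t..c}"
      have "k s + L \<ge> 0" using kb[of s] s c t by auto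
      then show "- (2 * (w s)^2 * exp (2 *  L* s) * (k s + L)) \<le> 0"
        by simp
    qed auto
    moreover have "h c = 0" unfolding h_def w_def using c by simp
    ultimately have "(w t)^2 * exp (2 *  L* t) \<le> 0" unfolding h_def by simp
    then have "(w t)^2 \<le> 0" by (simp add: mult_le_0_iff)
    then show ?thesis unfolding w_def by simp
  qed
qed

lemma abel_reflect:
  fixes g f x :: "real \<Rightarrow> real"
  assumes og: "\<And>t. g (-t) = - g t" and of: "\<And>t. f (-t) = - f t"
    and x: "abel_solution g f x"
  shows "abel_solution g f (\<lambda>t. x (-t))"
  unfolding abel_solution_def
proof
  fix t :: real assume t: "t \<in> {-1..1}"
  have img: "uminus ` {-1..1::real} = {-1..1}" by auto
  have "(x has_real_derivative (g (-t) * (x (-t))^2 + f (-t) * (x (-t))^3)) (at (-t) within uminus ` {-1..1})"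
    using x t unfolding abel_solution_def img by auto
  moreover have "(uminus has_real_derivative (-1)) (at t within {-1..1})"
    by (auto intro!: derivative_eq_intros)
  ultimately have "(x \<circ> uminus has_real_derivative (g (-t) * (x (-t))^2 + f (-t) * (x (-t))^3) * (-1)) (at t within {-1..1})"
    by (rule DERIV_image_chain)
  then show "((\<lambda>t. x (-t)) has_real_derivative (g t * (x (-t))^2 + f t * (x (-t))^3)) (at t within {-1..1})"
    by (simp add: o_def og of algebra_simps)
qed

lemma center_suff:
  fixes g f x :: "real \<Rightarrow> real"
  assumes cg: "continuous_on {-1..1} g" and cf: "continuous_on {-1..1} f"
    and og: "\<And>t. g (-t) = - g t" and of: "\<And>t. f (-t) = - f t"
    and x: "abel_solution g f x"
  shows "x 1 = x (-1)"
proof -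
  have "x 1 = (\<lambda>t. x (-t)) 1"
    by (rule abel_unique[OF cg cf x abel_reflect[OF og of x], of 0]) auto
  then show ?thesis by simp
qed

lemma sq_diff_bound:
  fixes p q r :: real
  assumes "\<bar>p\<bar> \<le> r" "\<bar>q\<bar> \<le> r"
  shows "\<bar>p^2 - q^2\<bar> \<le> 2 * r * \<bar>p - q\<bar>"
proof -
  have "\<bar>p^2 - q^2\<bar> = \<bar>p + q\<bar> * \<bar>p - q\<bar>"
    by (simp add: abs_mult[symmetric] algebra_simps power2_eq_square)
  also have "\<dots> \<le> (2 * r) * \<bar>p - q\<bar>"
    using assms by (intro mult_right_mono) auto
  finally show ?thesis by simp
qed

lemma cube_diff_bound:
  fixes p q r :: real
  assumes "\<bar>p\<bar> \<le> r" "\<bar>q\<bar> \<le> r"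
  shows "\<bar>p^3 - q^3\<bar> \<le> 3 * r^2 * \<bar>p - q\<bar>"
proof -
  have "\<bar>p^3 - q^3\<bar> = \<bar>p^2 + p * q + q^2\<bar> * \<bar>p - q\<bar>"
    by (simp add: abs_mult[symmetric] algebra_simps power2_eq_square power3_eq_cube)
  also have "\<bar>p^2 + p * q + q^2\<bar> \<le> \<bar>p\<bar>^2 + \<bar>p\<bar> * \<bar>q\<bar> + \<bar>q\<bar>^2"
  proof -
    have "\<bar>p^2 + p * q + q^2\<bar> \<le> \<bar>p^2\<bar> + \<bar>p * q\<bar> + \<bar>q^2\<bar>" by linarith
    then show ?thesis by (simp add: abs_mult)
  qed
  also have "\<dots> \<le> r^2 + r * r + r^2"
    using assms by (intro add_mono power_mono mult_mono) auto
  finally show ?thesis by (simp add: power2_eq_square mult_right_mono)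
qed

lemma clip_abs: "(r::real) \<ge> 0 \<Longrightarrow> \<bar>max (-r) (min r v)\<bar> \<le> r"
  by auto

lemma clip_lip: "\<bar>max (-(r::real)) (min r p) - max (-r) (min r q)\<bar> \<le> \<bar>p - q\<bar>"
  unfolding max_def min_def by (smt (verit))

lemma abel_exists:
  fixes g f :: "real \<Rightarrow> real" and K x0 :: real
  assumes cg: "continuous_on {-1..1} g" and cf: "continuous_on {-1..1} f"
    and K1: "K \<ge> 1" and gK: "\<And>t. t \<in> {-1..1} \<Longrightarrow> \<bar>g t\<bar> \<le> K"
    and fK: "\<And>t. t \<in> {-1..1} \<Longrightarrow> \<bar>f t\<bar> \<le> K"
    and x0: "\<bar>x0\<bar> \<le> 1 / (64 * K)"
  shows "\<exists>u. abel_solution g f u \<and> u (-1) = x0 \<and> (\<forall>t\<in>{-1..1}. \<bar>u t\<bar> \<le> 2 * \<bar>x0\<bar>)"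
proof -
  define a where "a = \<bar>x0\<bar>"
  define r where "r = 2 * a"
  have a0: "a \<ge> 0" unfolding a_def by simp
  have aK: "64 * K * a \<le> 1" using x0 K1 unfolding a_def by (simp add: field_simps)
  have r0: "r \<ge> 0" unfolding r_def using a0 by simp
  have aKa: "1 * a \<le> K * a" by (rule mult_right_mono[OF K1 a0])
  have r1: "r \<le> 1" using aK aKa a0 unfolding r_def by linarith
  have rr: "r * r \<le> r" using mult_left_le_one_le[OF r0 r0 r1] by simp
  define clip where "clip v = max (-r) (min r v)" for v
  define cl where "cl t = max (-1) (min 1 t)" for t :: real
  define H where "H \<phi> s = g s * (clip (\<phi> s))^2 + f s * (clip (\<phi> s))^3" for \<phi> :: "real \<Rightarrow> real" and s
  define Tf where "Tf \<phi> t = x0 + integral {-1..cl t} (H \<phi>)" for \<phi> :: "real \<Rightarrow> real" and t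
  have cl_in: "cl t \<in> {-1..1}" for t unfolding cl_def by auto
  have cl_id: "t \<in> {-1..1} \<Longrightarrow> cl t = t" for t unfolding cl_def by auto
  have clip_b: "\<bar>clip v\<bar> \<le> r" for v unfolding clip_def using r0 by auto
  have cont_clip: "continuous_on UNIV clip" unfolding clip_def by (intro continuous_intros)
  have cont_cl: "continuous_on UNIV cl" unfolding cl_def by (intro continuous_intros)
  have Hcont: "continuous_on {-1..1} (H \<phi>)" if "continuous_on UNIV \<phi>" for \<phi>
  proof -
    have "continuous_on {-1..1} (\<lambda>s. clip (\<phi> s))"
      by (rule continuous_on_compose2[OF cont_clip continuous_on_subset[OF that]]) auto
    then show ?thesis unfolding H_def by (intro continuous_intros cg cf)
  qed
  have Hb: "\<bar>H \<phi> s\<bar> \<le> 2 * K * r^2" if "s \<in> {-1..1}" for \<phi> s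
  proof -
    have "\<bar>H \<phi> s\<bar> \<le> \<bar>g s\<bar> * \<bar>clip (\<phi> s)\<bar>^2 + \<bar>f s\<bar> * \<bar>clip (\<phi> s)\<bar>^3"
      unfolding H_def by (metis abs_mult abs_triangle_ineq power_abs)
    also have "\<dots> \<le> K * r^2 + K * r^3"
      using gK[OF that] fK[OF that] clip_b r0 K1
      by (intro add_mono mult_mono power_mono) auto
    also have "\<dots> \<le> K * r^2 + K * r^2"
      using r0 r1 K1 by (intro add_mono mult_left_mono) (auto simp: power_decreasing)
    finally show ?thesis by simp
  qed
  have Hdiff: "\<bar>H \<phi> s - H \<psi> s\<bar> \<le> 5 * K * r * \<bar>\<phi> s - \<psi> s\<bar>" if "s \<in> {-1..1}" for \<phi> \<psi> s
  proof -
    define p where "p = clip (\<phi> s)"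
    define q where "q = clip (\<psi> s)"
    have pq: "\<bar>p - q\<bar> \<le> \<bar>\<phi> s - \<psi> s\<bar>" unfolding p_def q_def clip_def by (rule clip_lip)
    have "\<bar>H \<phi> s - H \<psi> s\<bar> = \<bar>g s * (p^2 - q^2) + f s * (p^3 - q^3)\<bar>"
      unfolding H_def p_def q_def by (simp add: algebra_simps)
    also have "\<dots> \<le> \<bar>g s\<bar> * \<bar>p^2 - q^2\<bar> + \<bar>f s\<bar> * \<bar>p^3 - q^3\<bar>"
      by (metis abs_mult abs_triangle_ineq)
    also have "\<dots> \<le> K * (2 * r * \<bar>p - q\<bar>) + K * (3 * r^2 * \<bar>p - q\<bar>)"
      using gK[OF that] fK[OF that] sq_diff_bound[OF clip_b clip_b] cube_diff_bound[OF clip_b clip_b]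
      unfolding p_def q_def by (intro add_mono mult_mono) auto
    also have "\<dots> \<le> K * (2 * r * \<bar>p - q\<bar>) + K * (3 * r * \<bar>p - q\<bar>)"
      using r0 r1 K1 rr by (intro add_mono mult_left_mono mult_right_mono) (auto simp: power2_eq_square)
    also have "\<dots> = 5 * K * r * \<bar>p - q\<bar>" by (simp add: algebra_simps)
    also have "\<dots> \<le> 5 * K * r * \<bar>\<phi> s - \<psi> s\<bar>"
      using pq r0 K1 by (intro mult_left_mono) auto
    finally show ?thesis .
  qed
  have intcont: "continuous_on {-1..1} (\<lambda>u. integral {-1..u} (H \<phi>))" if "continuous_on UNIV \<phi>" for \<phi>
    using integral_has_real_derivative[OF Hcont[OF that]] by (intro DERIV_continuous_on) auto
  have Tcont: "continuous_on UNIV (Tf \<phi>)" if "continuous_on UNIV \<phi>" for \<phi>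
  proof -
    have "continuous_on UNIV (\<lambda>t. integral {-1..cl t} (H \<phi>))"
      by (rule continuous_on_compose2[OF intcont[OF that] cont_cl]) (use cl_in in auto)
    then show ?thesis unfolding Tf_def by (intro continuous_intros)
  qed
  have intb: "\<bar>integral {-1..cl t} h\<bar> \<le> 2 * B" 
    if "continuous_on {-1..1} h" "\<And>s. s \<in> {-1..1} \<Longrightarrow> \<bar>h s\<bar> \<le> B" for h :: "real \<Rightarrow> real" and B t :: real
  proof -
    have "norm (integral {-1..cl t} h) \<le> B * (cl t - -1)"
      using cl_in[of t] that by (intro integral_bound) (auto intro: continuous_on_subset)
    moreover have "B \<ge> 0" using that(2)[of 0] by auto
    moreover have "B * (cl t + 1) \<le> B * 2" using cl_in[of t] \<open>B \<ge> 0\<close> by (intro mult_left_mono) auto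
    ultimately show ?thesis by simp
  qed
  have Tb: "\<bar>Tf \<phi> t - x0\<bar> \<le> a / 4" if "continuous_on UNIV \<phi>" for \<phi> t
  proof -
    have "\<bar>Tf \<phi> t - x0\<bar> \<le> 2 * (2 * K * r^2)"
      unfolding Tf_def using intb[OF Hcont[OF that] Hb, of t] by simp
    also have "\<dots> = 16 * K * a * a" unfolding r_def by (simp add: power2_eq_square)
    also have "\<dots> \<le> a / 4" using mult_right_mono[OF aK a0] by (simp add: algebra_simps)
    finally show ?thesis .
  qed
  have Tin: "Tf (apply_bcontfun \<phi>) \<in> bcontfun" for \<phi>
  proof (rule bcontfun_normI[where b = "\<bar>x0\<bar> + a"])
    show "continuous_on UNIV (Tf (apply_bcontfun \<phi>))" by (intro Tcont) simp
    fix t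
    show "norm (Tf (apply_bcontfun \<phi>) t) \<le> \<bar>x0\<bar> + a"
    proof -
      have "\<bar>Tf (apply_bcontfun \<phi>) t - x0\<bar> \<le> a / 4" by (rule Tb) simp
      then show ?thesis using a0 by (simp, smt (verit))
    qed
  qed
  define T where "T \<phi> = Bcontfun (Tf (apply_bcontfun \<phi>))" for \<phi> :: "real \<Rightarrow>\<^sub>C real"
  have Tapp: "apply_bcontfun (T \<phi>) = Tf (apply_bcontfun \<phi>)" for \<phi>
    unfolding T_def using Tin by (simp add: Bcontfun_inverse)
  have contr: "\<forall>\<phi> \<psi>. dist (T \<phi>) (T \<psi>) \<le> (1/2) * dist \<phi> \<psi>"
  proof (intro allI dist_bound)
    fix \<phi> \<psi> :: "real \<Rightarrow>\<^sub>C real" and t :: real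
    define d where "d = dist \<phi> \<psi>"
    have "Tf (apply_bcontfun \<phi>) t - Tf (apply_bcontfun \<psi>) t
        = integral {-1..cl t} (\<lambda>s. H (apply_bcontfun \<phi>) s - H (apply_bcontfun \<psi>) s)"
      unfolding Tf_def
      using cl_in[of t] by (subst integral_diff) (auto intro!: integrable_continuous_real continuous_on_subset[OF Hcont])
    moreover have "\<bar>integral {-1..cl t} (\<lambda>s. H (apply_bcontfun \<phi>) s - H (apply_bcontfun \<psi>) s)\<bar> \<le> 2 * (5 * K * r * d)"
    proof (rule intb)
      show "continuous_on {-1..1} (\<lambda>s. H (apply_bcontfun \<phi>) s - H (apply_bcontfun \<psi>) s)"
        by (intro continuous_intros Hcont) auto
      fix s :: real assume s: "s \<in> {-1..1}"
      have "\<bar>apply_bcontfun \<phi> s - apply_bcontfun \<psi> s\<bar> \<le> d"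
        unfolding d_def using dist_bounded[of \<phi> s \<psi>] by (simp add: dist_real_def)
      then show "\<bar>H (apply_bcontfun \<phi>) s - H (apply_bcontfun \<psi>) s\<bar> \<le> 5 * K * r * d"
        using Hdiff[OF s, of "apply_bcontfun \<phi>" "apply_bcontfun \<psi>"] r0 K1
        by (meson order_trans mult_left_mono mult_nonneg_nonneg zero_le_numeral less_imp_le zero_less_one order_trans[OF zero_le_one K1])
    qed
    moreover have "2 * (5 * K * r * d) \<le> (1/2) * d"
    proof -
      have "d \<ge> 0" unfolding d_def by simp
      moreover have "20 * K * a \<le> 1/2" using aK a0 K1 by linarith
      ultimately have "(20 * K * a) * d \<le> (1/2) * d" by (intro mult_right_mono) auto
      then show ?thesis unfolding r_def by (simp add: algebra_simps)
    qed
    ultimately show "dist (apply_bcontfun (T \<phi>) t) (apply_bcontfun (T \<psi>) t) \<le> 1 / 2 * dist \<phi> \<psi>"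
      unfolding Tapp d_def dist_real_def by linarith
  qed
  obtain \<phi> where fixpt: "T \<phi> = \<phi>" using banach_fix_type[OF _ _ contr] by auto
  define u where "u = apply_bcontfun \<phi>"
  have ueq: "u t = Tf u t" for t using Tapp[of \<phi>] fixpt unfolding u_def by metis
  have ub: "\<bar>u t\<bar> \<le> 5 / 4 * a" for t
    using Tb[of u t] ueq[of t] unfolding u_def a_def by (simp, smt (verit))
  have clipu: "clip (u s) = u s" for s
    using ub[of s] a0 unfolding clip_def r_def by auto
  have Hu: "H u s = g s * (u s)^2 + f s * (u s)^3" for s
    unfolding H_def clipu ..
  have ucont: "continuous_on UNIV u" unfolding u_def by simp
  have sol: "abel_solution g f u"
    unfolding abel_solution_def
  proof
    fix t :: real assume t: "t \<in> {-1..1}"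
    have "((\<lambda>t. x0 + integral {-1..t} (H u)) has_real_derivative (0 + H u t)) (at t within {-1..1})"
      by (intro DERIV_add DERIV_const integral_has_real_derivative Hcont ucont t)
    then have "((\<lambda>t. x0 + integral {-1..t} (H u)) has_real_derivative (H u t)) (at t within {-1..1})" by simp
    then have "(u has_real_derivative H u t) (at t within {-1..1})"
    proof (rule has_field_derivative_transform_within[OF _ zero_less_one t])
      fix s :: real assume "s \<in> {-1..1}"
      then show "x0 + integral {-1..s} (H u) = u s" using ueq[of s] cl_id[of s] unfolding Tf_def by simp
    qed
    then show "(u has_real_derivative g t * (u t)^2 + f t * (u t)^3) (at t within {-1..1})"
      unfolding Hu .
  qed
  have "u (-1) = x0" using ueq[of "-1"] cl_id[of "-1"] unfolding Tf_def by simp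
  moreover have "\<forall>t\<in>{-1..1}. \<bar>u t\<bar> \<le> 2 * \<bar>x0\<bar>"
  proof
    fix t :: real
    show "\<bar>u t\<bar> \<le> 2 * \<bar>x0\<bar>" using ub[of t] a0 unfolding a_def by linarith
  qed
  ultimately show ?thesis using sol by blast
qed

lemma deriv_bound2:
  fixes e D :: "real \<Rightarrow> real"
  assumes "\<And>t. t \<in> {-1..1} \<Longrightarrow> (e has_real_derivative D t) (at t within {-1..1})"
    and "\<And>t. t \<in> {-1..1} \<Longrightarrow> \<bar>D t\<bar> \<le> B" and "e (-1) = 0" and "t \<in> {-1..1}"
  shows "\<bar>e t\<bar> \<le> 2 * B"
proof -
  have "\<bar>e t - e (-1)\<bar> \<le> B * (t - -1)"
    by (rule deriv_bound[of "-1" 1 e D]) (use assms in auto)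
  moreover have "B \<ge> 0" using assms(2)[of 0] by auto
  moreover have "B * (t + 1) \<le> B * 2" using assms(4) \<open>B \<ge> 0\<close> by (intro mult_left_mono) auto
  ultimately show ?thesis using assms(3) by simp
qed

lemma lim0:
  fixes A B C D \<eta> :: real
  assumes "\<eta> > 0" "\<And>x. 0 < x \<Longrightarrow> x < \<eta> \<Longrightarrow> \<bar>A + B * x + C * x^2\<bar> \<le> D * x"
  shows "A = 0"
proof -
  have 1: "((\<lambda>x. D * x) \<longlongrightarrow> 0) (at_right 0)"
  proof -
    have "((\<lambda>x. D * x) \<longlongrightarrow> D * 0) (at_right 0)" by (intro tendsto_intros)
    then show ?thesis by simp
  qed
  have 2: "((\<lambda>x. \<bar>A + B * x + C * x^2\<bar>) \<longlongrightarrow> \<bar>A + B * 0 + C * 0^2\<bar>) (at_right 0)"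
    by (intro tendsto_intros)
  have 3: "\<forall>\<^sub>F x in at_right 0. \<bar>A + B * x + C * x^2\<bar> \<le> D * x"
    unfolding eventually_at_right_field using assms by (intro exI[of _ \<eta>]) auto
  have "\<bar>A + B * 0 + C * 0^2\<bar> \<le> 0"
    by (rule tendsto_le[OF _ 1 2 3]) simp
  then show ?thesis by simp
qed

lemma lim3:
  fixes A B C D \<eta> :: real
  assumes "\<eta> > 0" "\<And>x. 0 < x \<Longrightarrow> x < \<eta> \<Longrightarrow> \<bar>A * x + B * x^2 + C * x^3\<bar> \<le> D * x^4"
  shows "A = 0 \<and> B = 0 \<and> C = 0"
proof -
  define \<eta>' where "\<eta>' = min \<eta> 1"
  have e': "\<eta>' > 0" using assms(1) unfolding \<eta>'_def by simp
  have D0: "D \<ge> 0"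
  proof -
    have "\<bar>A * (\<eta>'/2) + B * (\<eta>'/2)^2 + C * (\<eta>'/2)^3\<bar> \<le> D * (\<eta>'/2)^4"
      using assms(2)[of "\<eta>'/2"] e' unfolding \<eta>'_def by auto
    then have "0 \<le> D * (\<eta>'/2)^4" by linarith
    then show ?thesis using e' by (simp add: zero_le_mult_iff)
  qed
  have A: "A = 0"
  proof (rule lim0[OF e', of A B C D])
    fix x :: real assume x: "0 < x" "x < \<eta>'"
    have "\<bar>A * x + B * x^2 + C * x^3\<bar> \<le> D * x^4" using assms(2)[of x] x unfolding \<eta>'_def by auto
    also have "A * x + B * x^2 + C * x^3 = x * (A + B * x + C * x^2)" by (simp add: algebra_simps power2_eq_square power3_eq_cube)
    also have "D * x^4 = x * (D * x^3)" by (simp add: power_numeral_reduce)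
    finally have "\<bar>A + B * x + C * x^2\<bar> \<le> D * x^3" using x by (simp add: abs_mult)
    also have "D * x^3 \<le> D * x" using x D0 unfolding \<eta>'_def
      by (intro mult_left_mono) (auto intro: power_le_one simp: power3_eq_cube mult_le_cancel_right1 mult_le_one)
    finally show "\<bar>A + B * x + C * x^2\<bar> \<le> D * x" .
  qed
  have B: "B = 0"
  proof (rule lim0[OF e', of B C 0 D])
    fix x :: real assume x: "0 < x" "x < \<eta>'"
    have "\<bar>A * x + B * x^2 + C * x^3\<bar> \<le> D * x^4" using assms(2)[of x] x unfolding \<eta>'_def by auto
    also have "A * x + B * x^2 + C * x^3 = x^2 * (B + C * x)" using A by (simp add: algebra_simps power2_eq_square power3_eq_cube)
    also have "D * x^4 = x^2 * (D * x^2)" by (simp add: power_numeral_reduce power2_eq_square)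
    finally have "\<bar>B + C * x\<bar> \<le> D * x^2" using x by (simp add: abs_mult)
    also have "D * x^2 \<le> D * x" using x D0 unfolding \<eta>'_def
      by (intro mult_left_mono) (auto simp: power2_eq_square mult_le_cancel_right1)
    finally show "\<bar>B + C * x + 0 * x^2\<bar> \<le> D * x" by simp
  qed
  have C: "C = 0"
  proof (rule lim0[OF e', of C 0 0 D])
    fix x :: real assume x: "0 < x" "x < \<eta>'"
    have "\<bar>A * x + B * x^2 + C * x^3\<bar> \<le> D * x^4" using assms(2)[of x] x unfolding \<eta>'_def by auto
    also have "A * x + B * x^2 + C * x^3 = x^3 * C" using A B by (simp add: algebra_simps)
    also have "D * x^4 = x^3 * (D * x)" by (simp add: power_numeral_reduce power3_eq_cube)
    finally show "\<bar>C + 0 * x + 0 * x^2\<bar> \<le> D * x" using x by (simp add: abs_mult)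
  qed
  show ?thesis using A B C by simp
qed

lemma absmul: "\<bar>p\<bar> \<le> A \<Longrightarrow> \<bar>q\<bar> \<le> B \<Longrightarrow> \<bar>(p::real) * q\<bar> \<le> A * B"
  by (simp add: abs_mult mult_mono')

definition cst1 :: "real \<Rightarrow> real" where "cst1 K = 16 * K"
definition cst2 :: "real \<Rightarrow> real" where "cst2 K = 2 * (K * (4 * cst1 K) + 8 * K)"
definition cst3 :: "real \<Rightarrow> real" where
  "cst3 K = 2 * (K * (1 + 4 * cst2 K + (cst2 K)^2) + K * (12 * cst1 K))"

lemma expansion:
  fixes g f P Q u :: "real \<Rightarrow> real" and K x0 :: real
  assumes K1: "K \<ge> 1" and gK: "\<And>t. t \<in> {-1..1} \<Longrightarrow> \<bar>g t\<bar> \<le> K"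
    and fK: "\<And>t. t \<in> {-1..1} \<Longrightarrow> \<bar>f t\<bar> \<le> K"
    and Pd: "\<And>t. t \<in> {-1..1} \<Longrightarrow> (P has_real_derivative g t) (at t within {-1..1})"
    and P0: "P (-1) = 0" and Pb: "\<And>t. t \<in> {-1..1} \<Longrightarrow> \<bar>P t\<bar> \<le> 1"
    and Qd: "\<And>t. t \<in> {-1..1} \<Longrightarrow> (Q has_real_derivative f t) (at t within {-1..1})"
    and Q0: "Q (-1) = 0"
    and u: "abel_solution g f u" and u0: "u (-1) = x0"
    and x0: "0 < x0" "x0 \<le> 1 / (64 * K)"
    and ub: "\<And>t. t \<in> {-1..1} \<Longrightarrow> \<bar>u t\<bar> \<le> 2 * x0"
    and t: "t \<in> {-1..1}"
  shows "\<bar>u t - x0\<bar> \<le> cst1 K * x0^2"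
    and "\<bar>u t - x0 - x0^2 * P t - x0^3 * ((P t)^2 + Q t)\<bar> \<le> cst3 K * x0^4"
proof -
  define a where "a = x0"
  have a0: "a > 0" using x0 unfolding a_def by simp
  have aK: "64 * K * a \<le> 1" using x0 K1 unfolding a_def by (simp add: field_simps)
  have aKa: "1 * a \<le> K * a" by (rule mult_right_mono[OF K1]) (use a0 in simp)
  have a1: "2 * a \<le> 1" using aK aKa a0 by linarith
  have ud: "\<And>t. t \<in> {-1..1} \<Longrightarrow> (u has_real_derivative g t * (u t)^2 + f t * (u t)^3) (at t within {-1..1})"
    using u unfolding abel_solution_def by auto
  have ub': "\<And>t. t \<in> {-1..1} \<Longrightarrow> \<bar>u t\<bar> \<le> 2 * a" using ub unfolding a_def .
  have x0b: "\<bar>x0\<bar> \<le> 2 * a" using a0 unfolding a_def by simp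
  have C1: "cst1 K \<ge> 0" unfolding cst1_def using K1 by simp
  have C2: "cst2 K \<ge> 0" unfolding cst2_def using K1 C1 by simp
  have D1b: "\<bar>g s * (u s)^2 + f s * (u s)^3\<bar> \<le> 8 * K * a^2" if s: "s \<in> {-1..1}" for s
  proof -
    have u2: "\<bar>(u s)^2\<bar> \<le> (2*a)^2" using power_mono[OF ub'[OF s] abs_ge_zero, of 2] by (simp add: power_abs)
    have u3: "\<bar>(u s)^3\<bar> \<le> (2*a)^3" using power_mono[OF ub'[OF s] abs_ge_zero, of 3] by (simp add: power_abs)
    have "(2*a)^3 \<le> (2*a)^2" using a0 a1 by (intro power_decreasing) auto
    then have u3': "\<bar>(u s)^3\<bar> \<le> (2*a)^2" using u3 by linarith
    have "\<bar>g s * (u s)^2 + f s * (u s)^3\<bar> \<le> K * (2*a)^2 + K * (2*a)^2"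
      using absmul[OF gK[OF s] u2] absmul[OF fK[OF s] u3'] by linarith
    then show ?thesis by (simp add: power2_eq_square)
  qed
  have e1: "\<bar>u s - x0\<bar> \<le> cst1 K * a^2" if s: "s \<in> {-1..1}" for s
  proof -
    have "\<bar>(\<lambda>s. u s - x0) s\<bar> \<le> 2 * (8 * K * a^2)"
    proof (rule deriv_bound2[OF _ D1b _ s])
      fix t :: real assume "t \<in> {-1..1}"
      then show "((\<lambda>s. u s - x0) has_real_derivative g t * (u t)^2 + f t * (u t)^3) (at t within {-1..1})"
        using ud by (auto intro!: derivative_eq_intros)
    qed (use u0 in simp_all)
    then show ?thesis unfolding cst1_def by simp
  qed
  show "\<bar>u t - x0\<bar> \<le> cst1 K * x0^2" using e1[OF t] unfolding a_def .
  have D2b: "\<bar>g s * (u s)^2 + f s * (u s)^3 - x0^2 * g s\<bar> \<le> (K * (4 * cst1 K) + 8 * K) * a^3" if s: "s \<in> {-1..1}" for s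
  proof -
    have "\<bar>(u s)^2 - x0^2\<bar> \<le> 2 * (2*a) * \<bar>u s - x0\<bar>" by (rule sq_diff_bound[OF ub'[OF s] x0b])
    also have "\<dots> \<le> 2 * (2*a) * (cst1 K * a^2)" using e1[OF s] a0 by (intro mult_left_mono) auto
    finally have w: "\<bar>(u s)^2 - x0^2\<bar> \<le> 4 * cst1 K * a^3" by (simp add: power2_eq_square power3_eq_cube mult_ac)
    have u3: "\<bar>(u s)^3\<bar> \<le> 8 * a^3" using ub'[OF s] power_mono[of "\<bar>u s\<bar>" "2*a" 3]
      by (simp add: power_abs)
    have eq: "g s * (u s)^2 + f s * (u s)^3 - x0^2 * g s = g s * ((u s)^2 - x0^2) + f s * (u s)^3"
      by (simp add: algebra_simps)
    have "\<bar>g s * ((u s)^2 - x0^2)\<bar> \<le> K * (4 * cst1 K * a^3)" by (rule absmul[OF gK[OF s] w])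
    moreover have "\<bar>f s * (u s)^3\<bar> \<le> K * (8 * a^3)" by (rule absmul[OF fK[OF s] u3])
    moreover have "K * (4 * cst1 K * a^3) + K * (8 * a^3) = (K * (4 * cst1 K) + 8 * K) * a^3"
      by (simp add: algebra_simps)
    ultimately show ?thesis unfolding eq using abs_triangle_ineq[of "g s * ((u s)^2 - x0^2)" "f s * (u s)^3"]
      by linarith
  qed
  have e2: "\<bar>u s - x0 - x0^2 * P s\<bar> \<le> cst2 K * a^3" if s: "s \<in> {-1..1}" for s
  proof -
    have "\<bar>(\<lambda>s. u s - x0 - x0^2 * P s) s\<bar> \<le> 2 * ((K * (4 * cst1 K) + 8 * K) * a^3)"
    proof (rule deriv_bound2[OF _ D2b _ s])
      fix t :: real assume "t \<in> {-1..1}"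
      then show "((\<lambda>s. u s - x0 - x0^2 * P s) has_real_derivative g t * (u t)^2 + f t * (u t)^3 - x0^2 * g t) (at t within {-1..1})"
        using ud Pd by (auto intro!: derivative_eq_intros)
    qed (use u0 P0 in simp_all)
    then show ?thesis unfolding cst2_def by (simp add: algebra_simps)
  qed
  have D3b: "\<bar>g s * (u s)^2 + f s * (u s)^3 - x0^2 * g s - x0^3 * (2 * P s * g s + f s)\<bar>
      \<le> (K * (1 + 4 * cst2 K + (cst2 K)^2) + K * (12 * cst1 K)) * a^4" if s: "s \<in> {-1..1}" for s
  proof -
    define e where "e = u s - x0 - x0^2 * P s"
    have eb: "\<bar>e\<bar> \<le> cst2 K * a^3" using e2[OF s] unfolding e_def .
    have Pb2: "\<bar>(P s)^2\<bar> \<le> 1" using absmul[OF Pb[OF s] Pb[OF s]] by (simp add: power2_eq_square) 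
    have id: "g s * (u s)^2 + f s * (u s)^3 - x0^2 * g s - x0^3 * (2 * P s * g s + f s)
        = g s * (x0^4 * (P s)^2 + 2 * x0 * e + 2 * x0^2 * P s * e + e^2) + f s * ((u s)^3 - x0^3)"
      unfolding e_def by (simp add: algebra_simps power2_eq_square power3_eq_cube power4_eq_xxxx)
    have a4: "a^5 \<le> a^4" "a^6 \<le> a^4" using a0 a1 by (auto intro: power_decreasing)
    have T1: "\<bar>x0^4 * (P s)^2\<bar> \<le> a^4 * 1" using absmul[OF _ Pb2, of "x0^4" "a^4"] unfolding a_def by (simp add: power_abs)
    have T2: "\<bar>(2 * x0) * e\<bar> \<le> (2 * a) * (cst2 K * a^3)" using absmul[OF _ eb, of "2*x0" "2*a"] unfolding a_def using a0 unfolding a_def by simp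
    have T3: "\<bar>(2 * x0^2 * P s) * e\<bar> \<le> (2 * a^2 * 1) * (cst2 K * a^3)"
      using absmul[OF _ eb, of "2*x0^2*P s" "2*a^2*1"] absmul[OF _ Pb[OF s], of "2*x0^2" "2*a^2"] unfolding a_def
      by (simp add: power_abs)
    have T4: "\<bar>e * e\<bar> \<le> (cst2 K * a^3) * (cst2 K * a^3)" by (rule absmul[OF eb eb])
    have "(2 * a) * (cst2 K * a^3) = 2 * cst2 K * a^4" by (simp add: power_numeral_reduce)
    moreover have "(2 * a^2 * 1) * (cst2 K * a^3) = 2 * cst2 K * a^5" by (simp add: power_numeral_reduce)
    moreover have "(cst2 K * a^3) * (cst2 K * a^3) = (cst2 K)^2 * a^6" by (simp add: power_numeral_reduce power2_eq_square)
    moreover have "2 * cst2 K * a^5 \<le> 2 * cst2 K * a^4" using a4 C2 by (intro mult_left_mono) auto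
    moreover have "(cst2 K)^2 * a^6 \<le> (cst2 K)^2 * a^4" using a4 by (intro mult_left_mono) auto
    moreover have "\<bar>x0^4 * (P s)^2 + 2 * x0 * e + 2 * x0^2 * P s * e + e^2\<bar>
      \<le> \<bar>x0^4 * (P s)^2\<bar> + \<bar>(2 * x0) * e\<bar> + \<bar>(2 * x0^2 * P s) * e\<bar> + \<bar>e * e\<bar>"
      by (simp only: power2_eq_square[of e])
    moreover have "(1 + 4 * cst2 K + (cst2 K)^2) * a^4 = a^4 * 1 + 2 * cst2 K * a^4 + 2 * cst2 K * a^4 + (cst2 K)^2 * a^4"
      by (simp add: algebra_simps)
    ultimately have W: "\<bar>x0^4 * (P s)^2 + 2 * x0 * e + 2 * x0^2 * P s * e + e^2\<bar> \<le> (1 + 4 * cst2 K + (cst2 K)^2) * a^4"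
      using T1 T2 T3 T4 by linarith
    have "\<bar>(u s)^3 - x0^3\<bar> \<le> 3 * (2*a)^2 * \<bar>u s - x0\<bar>" by (rule cube_diff_bound[OF ub'[OF s] x0b])
    also have "\<dots> \<le> 3 * (2*a)^2 * (cst1 K * a^2)" using e1[OF s] by (intro mult_left_mono) auto
    finally have V: "\<bar>(u s)^3 - x0^3\<bar> \<le> 12 * cst1 K * a^4" by (simp add: power_numeral_reduce power2_eq_square mult_ac)
    have "\<bar>g s * (x0^4 * (P s)^2 + 2 * x0 * e + 2 * x0^2 * P s * e + e^2)\<bar> \<le> K * ((1 + 4 * cst2 K + (cst2 K)^2) * a^4)"
      by (rule absmul[OF gK[OF s] W])
    moreover have "\<bar>f s * ((u s)^3 - x0^3)\<bar> \<le> K * (12 * cst1 K * a^4)" by (rule absmul[OF fK[OF s] V])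
    moreover have "K * ((1 + 4 * cst2 K + (cst2 K)^2) * a^4) + K * (12 * cst1 K * a^4)
       = (K * (1 + 4 * cst2 K + (cst2 K)^2) + K * (12 * cst1 K)) * a^4" by (simp add: algebra_simps)
    ultimately show ?thesis unfolding id
      using abs_triangle_ineq[of "g s * (x0^4 * (P s)^2 + 2 * x0 * e + 2 * x0^2 * P s * e + e^2)" "f s * ((u s)^3 - x0^3)"]
      by linarith
  qed
  have "\<bar>(\<lambda>s. u s - x0 - x0^2 * P s - x0^3 * ((P s)^2 + Q s)) t\<bar>
      \<le> 2 * ((K * (1 + 4 * cst2 K + (cst2 K)^2) + K * (12 * cst1 K)) * a^4)"
  proof (rule deriv_bound2[OF _ D3b _ t])
    fix t :: real assume "t \<in> {-1..1}"
    then show "((\<lambda>s. u s - x0 - x0^2 * P s - x0^3 * ((P s)^2 + Q s)) has_real_derivative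
        g t * (u t)^2 + f t * (u t)^3 - x0^2 * g t - x0^3 * (2 * P t * g t + f t)) (at t within {-1..1})"
      using ud Pd Qd by (auto intro!: derivative_eq_intros)
  qed (use u0 P0 Q0 in simp_all)
  then show "\<bar>u t - x0 - x0^2 * P t - x0^3 * ((P t)^2 + Q t)\<bar> \<le> cst3 K * x0^4"
    unfolding cst3_def a_def by (simp add: algebra_simps)
qed

lemma moment_bound:
  fixes g f P Q Sb Sc u :: "real \<Rightarrow> real" and K x0 :: real
  assumes K1: "K \<ge> 1" and gK: "\<And>t. t \<in> {-1..1} \<Longrightarrow> \<bar>g t\<bar> \<le> K"
    and fK: "\<And>t. t \<in> {-1..1} \<Longrightarrow> \<bar>f t\<bar> \<le> K"
    and Pd: "\<And>t. t \<in> {-1..1} \<Longrightarrow> (P has_real_derivative g t) (at t within {-1..1})"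
    and P0: "P (-1) = 0" and P1: "P 1 = 0" and Pb: "\<And>t. t \<in> {-1..1} \<Longrightarrow> \<bar>P t\<bar> \<le> 1"
    and Qd: "\<And>t. t \<in> {-1..1} \<Longrightarrow> (Q has_real_derivative f t) (at t within {-1..1})"
    and Q0: "Q (-1) = 0"
    and Sbd: "\<And>t. t \<in> {-1..1} \<Longrightarrow> (Sb has_real_derivative f t * P t) (at t within {-1..1})"
    and Sb0: "Sb (-1) = 0"
    and Scd: "\<And>t. t \<in> {-1..1} \<Longrightarrow> (Sc has_real_derivative f t * ((P t)^2 + Q t)) (at t within {-1..1})"
    and Sc0: "Sc (-1) = 0"
    and u: "abel_solution g f u" and u0: "u (-1) = x0" and u1: "u 1 = x0"
    and x0: "0 < x0" "x0 \<le> 1 / (64 * K)"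
    and ub: "\<And>t. t \<in> {-1..1} \<Longrightarrow> \<bar>u t\<bar> \<le> 2 * x0"
  shows "\<bar>x0 * Q 1 + x0^2 * Sb 1 + x0^3 * Sc 1\<bar> \<le> 2 * (K * cst3 K) * x0^4"
proof -
  have exp1: "\<bar>u t - x0\<bar> \<le> cst1 K * x0^2" if "t \<in> {-1..1}" for t
    by (rule expansion(1)[of K g f P Q u x0], (assumption | rule assms that)+)
  have exp2: "\<bar>u t - x0 - x0^2 * P t - x0^3 * ((P t)^2 + Q t)\<bar> \<le> cst3 K * x0^4" if "t \<in> {-1..1}" for t
    by (rule expansion(2)[of K g f P Q u x0], (assumption | rule assms that)+)
  have upos: "u t \<noteq> 0" if t: "t \<in> {-1..1}" for t
  proof -
    have "\<bar>u t - x0\<bar> \<le> 16 * K * x0^2" using exp1[OF t] unfolding cst1_def .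
    moreover have "16 * K * x0 * x0 \<le> x0 / 4" using mult_right_mono[of "64 * K * x0" 1 x0] x0 K1
      by (simp add: field_simps)
    ultimately have "\<bar>u t - x0\<bar> \<le> x0 / 4" by (simp add: power2_eq_square mult.assoc)
    then show ?thesis using x0 by auto
  qed
  define Y where "Y t = inverse (u t) + P t - inverse x0 + x0 * Q t + x0^2 * Sb t + x0^3 * Sc t" for t
  define e3 where "e3 t = u t - x0 - x0^2 * P t - x0^3 * ((P t)^2 + Q t)" for t
  have Yd: "(Y has_real_derivative (- (f t * e3 t))) (at t within {-1..1})" if t: "t \<in> {-1..1}" for t
  proof -
    have ud: "(u has_real_derivative g t * (u t)^2 + f t * (u t)^3) (at t within {-1..1})"
      using u t unfolding abel_solution_def by auto
    have "((\<lambda>t. inverse (u t)) has_real_derivative (- ((g t * (u t)^2 + f t * (u t)^3) * inverse (u t ^ Suc (Suc 0))))) (at t within {-1..1})"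
      by (rule DERIV_inverse_fun[OF ud upos[OF t]])
    moreover have "- ((g t * (u t)^2 + f t * (u t)^3) * inverse (u t ^ Suc (Suc 0))) = - (g t + f t * u t)"
      using upos[OF t] by (simp add: field_simps power2_eq_square power3_eq_cube)
    ultimately have invd: "((\<lambda>t. inverse (u t)) has_real_derivative (- (g t + f t * u t))) (at t within {-1..1})"
      by simp
    have "(Y has_real_derivative (- (g t + f t * u t) + g t - 0 + x0 * f t + x0^2 * (f t * P t) + x0^3 * (f t * ((P t)^2 + Q t)))) (at t within {-1..1})"
      unfolding Y_def
      by (intro DERIV_add DERIV_diff DERIV_cmult invd Pd[OF t] Qd[OF t] Sbd[OF t] Scd[OF t] DERIV_const)
    moreover have "- (g t + f t * u t) + g t - 0 + x0 * f t + x0^2 * (f t * P t) + x0^3 * (f t * ((P t)^2 + Q t)) = - (f t * e3 t)"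
      unfolding e3_def by (simp add: algebra_simps)
    ultimately show ?thesis by simp
  qed
  have "\<bar>Y 1\<bar> \<le> 2 * (K * (cst3 K * x0^4))"
  proof (rule deriv_bound2[OF Yd])
    fix t :: real assume t: "t \<in> {-1..1}"
    have "\<bar>f t * e3 t\<bar> \<le> K * (cst3 K * x0^4)" using absmul[OF fK[OF t] exp2[OF t]] unfolding e3_def .
    then show "\<bar>- (f t * e3 t)\<bar> \<le> K * (cst3 K * x0^4)" by simp
  qed (use u0 P0 Q0 Sb0 Sc0 in \<open>auto simp: Y_def\<close>)
  moreover have "Y 1 = x0 * Q 1 + x0^2 * Sb 1 + x0^3 * Sc 1" unfolding Y_def using u1 P1 by simp
  ultimately show ?thesis by (simp add: algebra_simps)
qed

lemma poly_sum_le: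
  fixes p :: "real poly"
  assumes "degree p \<le> N"
  shows "poly p x = (\<Sum>i\<le>N. coeff p i * x ^ i)"
proof -
  have "poly p x = (\<Sum>i\<le>degree p. coeff p i * x ^ i)" by (rule poly_altdef)
  also have "\<dots> = (\<Sum>i\<le>N. coeff p i * x ^ i)"
    by (rule sum.mono_neutral_left) (use assms in \<open>auto simp: coeff_eq_0\<close>)
  finally show ?thesis .
qed

definition Aq :: "nat \<Rightarrow> real \<Rightarrow> real" where
  "Aq e t = (t ^ (e + 1) - (-1) ^ (e + 1)) / real (e + 1)"

lemma Aq_deriv: "(Aq e has_real_derivative t ^ e) (at t within S)"
proof -
  have "((\<lambda>t. (t ^ (e + 1) - (-1) ^ (e + 1)) / real (e + 1)) has_real_derivative
      (real (e + 1) * t ^ (e + 1 - Suc 0) - 0) / real (e + 1)) (at t within S)"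
    by (intro DERIV_cdivide DERIV_diff DERIV_pow DERIV_const)
  then show ?thesis unfolding Aq_def by simp
qed

lemma Aq_m1: "Aq e (-1) = 0" unfolding Aq_def by simp

lemma Aq_1: "even m \<Longrightarrow> Aq (e + m) 1 = (1 - (-1) ^ (e + 1)) / real (e + m + 1)"
  unfolding Aq_def by (simp add: power_add)

lemma Aq_10: "Aq e 1 = (1 - (-1) ^ (e + 1)) / real (e + 1)"
  unfolding Aq_def by simp

lemma test5: "(\<Sum>i\<le>5. (c::nat\<Rightarrow>real) i * (1 - (-1) ^ (i + 1)) / real (i + 1)) = 2 * c 0 + 2 * c 2 / 3 + 2 * c 4 / 5"
  by (simp add: eval_nat_numeral)

lemma clear3:
  fixes N c0 c2 c4 x y z :: real
  assumes n: "x \<noteq> 0" "y \<noteq> 0" "z \<noteq> 0" and e2: "c0 / x + c2 / y + c4 / z = 0"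
  shows "c0 * (y * z) + c2 * (x * z) + c4 * (x * y) = 0"
proof -
  have "(c0 / x + c2 / y + c4 / z) * (x * y * z) = c0 / x * (x * y * z) + c2 / y * (x * y * z) + c4 / z * (x * y * z)"
    by (simp only: distrib_right)
  also have "c0 / x * (x * y * z) = c0 * (y * z)" using n by (simp add: field_simps)
  also have "c2 / y * (x * y * z) = c2 * (x * z)" using n by (simp add: field_simps)
  also have "c4 / z * (x * y * z) = c4 * (x * y)" using n by (simp add: field_simps)
  finally show ?thesis using e2 by simp
qed

lemma cauchy3:
  fixes N c0 c2 c4 :: real
  assumes N: "N > 0"
    and e1: "c0 + c2 / 3 + c4 / 5 = 0"
    and e2: "c0 / (N + 1) + c2 / (N + 3) + c4 / (N + 5) = 0"
    and e3: "c0 / (2 * N + 1) + c2 / (2 * N + 3) + c4 / (2 * N + 5) = 0"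
  shows "c0 = 0 \<and> c2 = 0 \<and> c4 = 0"
proof -
  define \<alpha> where "\<alpha> = c0 + c2 + c4"
  define \<beta> where "\<beta> = 8 * c0 + 6 * c2 + 4 * c4"
  define \<gamma> where "\<gamma> = 15 * c0 + 5 * c2 + 3 * c4"
  have h1: "\<gamma> = 0" using e1 unfolding \<gamma>_def by (simp add: field_simps)
  have p: "c0 * ((y + 3) * (y + 5)) + c2 * ((y + 1) * (y + 5)) + c4 * ((y + 1) * (y + 3)) = \<alpha> * y^2 + \<beta> * y + \<gamma>" for y :: real
    unfolding \<alpha>_def \<beta>_def \<gamma>_def by (simp add: algebra_simps power2_eq_square)
  have "c0 * ((N + 3) * (N + 5)) + c2 * ((N + 1) * (N + 5)) + c4 * ((N + 1) * (N + 3)) = 0"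
    by (rule clear3[OF _ _ _ e2]) (use N in auto)
  then have h2: "\<alpha> * N^2 + \<beta> * N + \<gamma> = 0" using p[of N] by simp
  have "c0 * ((2 * N + 3) * (2 * N + 5)) + c2 * ((2 * N + 1) * (2 * N + 5)) + c4 * ((2 * N + 1) * (2 * N + 3)) = 0"
    by (rule clear3[OF _ _ _ e3]) (use N in auto)
  then have h3: "\<alpha> * (2 * N)^2 + \<beta> * (2 * N) + \<gamma> = 0" using p[of "2 * N"] by simp
  have "N * (\<alpha> * N + \<beta>) = 0" using h1 h2 by (simp add: algebra_simps power2_eq_square)
  then have k1: "\<alpha> * N + \<beta> = 0" using N by simp
  have "N * (2 * \<alpha> * N + \<beta>) = 0" using h1 h3 by (simp add: algebra_simps power2_eq_square)
  then have k2: "2 * \<alpha> * N + \<beta> = 0" using N by simp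
  have "\<alpha> * N = 0" using k1 k2 by linarith
  then have a0: "\<alpha> = 0" using N by simp
  then have b0: "\<beta> = 0" using k1 by simp
  show ?thesis using a0 b0 h1 unfolding \<alpha>_def \<beta>_def \<gamma>_def by linarith
qed

definition Qf :: "(nat \<Rightarrow> real) \<Rightarrow> real \<Rightarrow> real" where
  "Qf a t = (\<Sum>i\<le>5. a i * Aq i t)"
definition S2f :: "(nat \<Rightarrow> real) \<Rightarrow> nat \<Rightarrow> real \<Rightarrow> real" where
  "S2f a n t = (\<Sum>i\<le>5. a i * (Aq (i + n) t - Aq i t) / real n)"
definition T3f :: "(nat \<Rightarrow> real) \<Rightarrow> nat \<Rightarrow> real \<Rightarrow> real" where
  "T3f a n t = (\<Sum>i\<le>5. a i * (Aq (i + 2 * n) t - 2 * Aq (i + n) t + Aq i t) / (real n)^2)"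
definition fp :: "(nat \<Rightarrow> real) \<Rightarrow> real \<Rightarrow> real" where
  "fp a t = (\<Sum>i\<le>5. a i * t ^ i)"
definition Pf :: "nat \<Rightarrow> real \<Rightarrow> real" where
  "Pf n t = (t ^ n - 1) / real n"

lemma Qf_deriv: "(Qf a has_real_derivative fp a t) (at t within S)"
  unfolding Qf_def fp_def by (intro DERIV_sum DERIV_cmult Aq_deriv)

lemma S2f_deriv:
  assumes "n > 0"
  shows "(S2f a n has_real_derivative fp a t * Pf n t) (at t within S)"
proof -
  have "(S2f a n has_real_derivative (\<Sum>i\<le>5. a i * (t ^ (i + n) - t ^ i) / real n)) (at t within S)"
    unfolding S2f_def by (intro DERIV_sum DERIV_cdivide DERIV_cmult DERIV_diff Aq_deriv)
  moreover have "(\<Sum>i\<le>5. a i * (t ^ (i + n) - t ^ i) / real n) = fp a t * Pf n t"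
    unfolding fp_def Pf_def sum_distrib_right
    by (rule sum.cong) (simp_all add: power_add algebra_simps diff_divide_distrib)
  ultimately show ?thesis by simp
qed

lemma T3f_deriv:
  assumes "n > 0"
  shows "(T3f a n has_real_derivative fp a t * (Pf n t)^2) (at t within S)"
proof -
  have "(T3f a n has_real_derivative (\<Sum>i\<le>5. a i * (t ^ (i + 2 * n) - 2 * t ^ (i + n) + t ^ i) / (real n)^2)) (at t within S)"
    unfolding T3f_def by (intro DERIV_sum DERIV_cdivide DERIV_cmult DERIV_diff DERIV_add Aq_deriv)
  moreover have "(\<Sum>i\<le>5. a i * (t ^ (i + 2 * n) - 2 * t ^ (i + n) + t ^ i) / (real n)^2) = fp a t * (Pf n t)^2"
    unfolding fp_def Pf_def sum_distrib_right
    by (rule sum.cong) (simp_all add: power_add power_mult algebra_simps power2_eq_square diff_divide_distrib add_divide_distrib)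
  ultimately show ?thesis by simp
qed

lemma Qf_1: "Qf a 1 = 2 * (a 0 + a 2 / 3 + a 4 / 5)"
  unfolding Qf_def Aq_10 by (simp add: eval_nat_numeral)

lemma S2f_1:
  assumes "even n" "n > 0"
  shows "S2f a n 1 = 2 / real n * ((a 0 / (real n + 1) + a 2 / (real n + 3) + a 4 / (real n + 5)) - (a 0 + a 2 / 3 + a 4 / 5))"
proof -
  have m: "(-1::real) ^ n = 1" using assms by simp
  show ?thesis unfolding S2f_def Aq_10 by (simp add: eval_nat_numeral power_add m add_divide_distrib diff_divide_distrib algebra_simps)
qed
lemma T3f_1:
  assumes "even n" "n > 0"
  shows "T3f a n 1 = 2 / (real n)^2 * ((a 0 / (2 * real n + 1) + a 2 / (2 * real n + 3) + a 4 / (2 * real n + 5))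
     - 2 * (a 0 / (real n + 1) + a 2 / (real n + 3) + a 4 / (real n + 5)) + (a 0 + a 2 / 3 + a 4 / 5))"
proof -
  have m: "(-1::real) ^ n = 1" using assms by simp
  show ?thesis unfolding T3f_def Aq_10 by (simp add: eval_nat_numeral power_add power_mult m add_divide_distrib diff_divide_distrib algebra_simps)
qed

lemma odd_poly_neg:
  fixes f :: "real poly"
  assumes "odd_poly f"
  shows "poly f (-t) = - poly f t"
proof -
  have "poly f (-t) = (\<Sum>i\<le>degree f. coeff f i * (-t) ^ i)" by (rule poly_altdef)
  also have "\<dots> = (\<Sum>i\<le>degree f. - (coeff f i * t ^ i))"
  proof (rule sum.cong)
    fix i assume "i \<in> {..degree f}"
    show "coeff f i * (-t) ^ i = - (coeff f i * t ^ i)"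
    proof (cases "even i")
      case True then show ?thesis using assms unfolding odd_poly_def by simp
    next
      case False then show ?thesis by (simp add: power_minus_odd)
    qed
  qed simp
  also have "\<dots> = - poly f t" by (simp add: poly_altdef sum_negf)
  finally show ?thesis .
qed

lemma Pf_props:
  assumes n: "n > 0" "even n"
  shows "\<And>t. (Pf n has_real_derivative t ^ (n - 1)) (at t within S)"
    and "Pf n (-1) = 0" and "Pf n 1 = 0"
    and "\<And>t. t \<in> {-1..1} \<Longrightarrow> \<bar>Pf n t\<bar> \<le> 1"
proof -
  fix t :: real
  have "(Pf n has_real_derivative (real n * t ^ (n - Suc 0) - 0) / real n) (at t within S)"
    unfolding Pf_def by (intro DERIV_cdivide DERIV_diff DERIV_pow DERIV_const)
  then show "(Pf n has_real_derivative t ^ (n - 1)) (at t within S)" using n by simp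
next
  show "Pf n (-1) = 0" unfolding Pf_def using n by simp
  show "Pf n 1 = 0" unfolding Pf_def by simp
next
  fix t :: real assume t: "t \<in> {-1..1}"
  have "\<bar>t\<bar> \<le> 1" using t by auto
  then have "\<bar>t\<bar> ^ n \<le> 1" by (rule power_le_one[OF abs_ge_zero])
  then have "\<bar>t ^ n\<bar> \<le> 1" by (simp only: power_abs)
  moreover have "t ^ n \<ge> 0" using n by (simp add: zero_le_even_power)
  ultimately have "\<bar>t ^ n - 1\<bar> \<le> 1" by linarith
  moreover have "real n \<ge> 1" using n by simp
  ultimately have "\<bar>t ^ n - 1\<bar> / real n \<le> 1 / real n" by (intro divide_right_mono) auto
  moreover have "1 / real n \<le> 1" using n by simp
  moreover have "\<bar>Pf n t\<bar> = \<bar>t ^ n - 1\<bar> / real n" unfolding Pf_def by simp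
  ultimately show "\<bar>Pf n t\<bar> \<le> 1" by linarith
qed

theorem corollary1:
  fixes n :: nat and f :: "real poly"
  assumes "n > 0" and "even n" and "degree f \<le> 5"
  shows "abel_center (\<lambda>t. t ^ (n - 1)) (\<lambda>t. poly f t) \<longleftrightarrow> odd_poly f"
proof -
  define g where "g t = t ^ (n - 1)" for t :: real
  define ff where "ff t = poly f t" for t
  define a where "a i = coeff f i" for i
  have n0: "n > 0" and ev: "even n" using assms by auto
  have ffa: "ff t = fp a t" for t unfolding ff_def fp_def a_def by (rule poly_sum_le[OF assms(3)])
  have cg: "continuous_on {-1..1} g" unfolding g_def by (intro continuous_intros)
  have cf: "continuous_on {-1..1} ff" unfolding ff_def by (intro continuous_intros)
  obtain B where B: "B \<ge> 0" "\<And>s. s \<in> {-1..1} \<Longrightarrow> \<bar>ff s\<bar> \<le> B" using cont_bound[OF cf] by blast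
  define K where "K = B + 1"
  have K1: "K \<ge> 1" unfolding K_def using B by simp
  have fK: "\<bar>ff s\<bar> \<le> K" if "s \<in> {-1..1}" for s using B(2)[OF that] unfolding K_def by simp
  have gK: "\<bar>g s\<bar> \<le> K" if "s \<in> {-1..1}" for s
  proof -
    have "\<bar>s\<bar> \<le> 1" using that by auto
    then have "\<bar>s\<bar> ^ (n - 1) \<le> 1" by (rule power_le_one[OF abs_ge_zero])
    then show ?thesis using K1 unfolding g_def by (simp add: power_abs)
  qed
  have Kpos: "K > 0" using K1 by simp
  show ?thesis unfolding g_def[symmetric] ff_def[symmetric]
  proof
    assume ctr: "abel_center g ff"
    then obtain \<delta> where \<delta>: "\<delta> > 0" and cen: "\<And>x0. \<bar>x0\<bar> < \<delta> \<Longrightarrow>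
        (\<exists>x. abel_solution g ff x \<and> x (-1) = x0) \<and>
        (\<forall>x. abel_solution g ff x \<and> x (-1) = x0 \<longrightarrow> x 1 = x0)"
      unfolding abel_center_def by blast
    define \<eta> where "\<eta> = min \<delta> (1 / (64 * K))"
    have \<eta>0: "\<eta> > 0" unfolding \<eta>_def using \<delta> Kpos by simp
    define S3 where "S3 t = T3f a n t + (Qf a t)^2 / 2" for t
    have Pd: "\<And>t. t \<in> {-1..1} \<Longrightarrow> (Pf n has_real_derivative g t) (at t within {-1..1})"
      unfolding g_def using Pf_props(1)[OF n0 ev] .
    have Qd: "\<And>t. t \<in> {-1..1} \<Longrightarrow> (Qf a has_real_derivative ff t) (at t within {-1..1})"
      unfolding ffa by (rule Qf_deriv)
    have S2d: "\<And>t. t \<in> {-1..1} \<Longrightarrow> (S2f a n has_real_derivative ff t * Pf n t) (at t within {-1..1})"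
      unfolding ffa by (rule S2f_deriv[OF n0])
    have S3d: "(S3 has_real_derivative ff t * ((Pf n t)^2 + Qf a t)) (at t within {-1..1})" for t
    proof -
      have "(S3 has_real_derivative (fp a t * (Pf n t)^2 + (of_nat 2 * (fp a t * (Qf a t) ^ (2 - Suc 0))) / 2)) (at t within {-1..1})"
        unfolding S3_def by (intro DERIV_add T3f_deriv[OF n0] DERIV_cdivide DERIV_power Qf_deriv)
      then show ?thesis unfolding ffa by (simp add: algebra_simps)
    qed
    have Q0: "Qf a (-1) = 0" unfolding Qf_def Aq_m1 by simp
    have S20: "S2f a n (-1) = 0" unfolding S2f_def Aq_m1 by simp
    have S30: "S3 (-1) = 0" unfolding S3_def T3f_def Qf_def Aq_m1 by simp
    have key: "\<bar>x0 * Qf a 1 + x0^2 * S2f a n 1 + x0^3 * S3 1\<bar> \<le> 2 * (K * cst3 K) * x0^4"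
      if x0: "0 < x0" "x0 < \<eta>" for x0
    proof -
      have x0K: "\<bar>x0\<bar> \<le> 1 / (64 * K)" using x0 unfolding \<eta>_def by simp
      obtain u where u: "abel_solution g ff u" "u (-1) = x0" "\<forall>t\<in>{-1..1}. \<bar>u t\<bar> \<le> 2 * \<bar>x0\<bar>"
        using abel_exists[OF cg cf K1 gK fK x0K] by blast
      have "\<bar>x0\<bar> < \<delta>" using x0 unfolding \<eta>_def by simp
      then have u1: "u 1 = x0" using cen u by blast
      show ?thesis
      proof (rule moment_bound[where g = g and f = ff and P = "Pf n" and Q = "Qf a" and Sb = "S2f a n" and Sc = S3 and u = u and K = K])
        show "\<And>t. t \<in> {-1..1} \<Longrightarrow> \<bar>u t\<bar> \<le> 2 * x0" using u(3) x0 by auto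
      qed (use K1 gK fK Pd Pf_props(2-4)[OF n0 ev] Qd Q0 S2d S20 S3d S30 u u1 x0 x0K in auto)
    qed
    have z: "Qf a 1 = 0 \<and> S2f a n 1 = 0 \<and> S3 1 = 0"
    proof (rule lim3[OF \<eta>0])
      fix x :: real assume "0 < x" "x < \<eta>"
      from key[OF this] show "\<bar>Qf a 1 * x + S2f a n 1 * x^2 + S3 1 * x^3\<bar> \<le> 2 * (K * cst3 K) * x^4"
        by (simp add: algebra_simps)
    qed
    define N where "N = real n"
    have N0: "N > 0" unfolding N_def using n0 by simp
    have c1: "a 0 + a 2 / 3 + a 4 / 5 = 0" using z Qf_1[of a] by simp
    have "2 / N * ((a 0 / (N + 1) + a 2 / (N + 3) + a 4 / (N + 5)) - (a 0 + a 2 / 3 + a 4 / 5)) = 0"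
      using z S2f_1[OF ev n0, of a] unfolding N_def by simp
    then have c2: "a 0 / (N + 1) + a 2 / (N + 3) + a 4 / (N + 5) = 0" using c1 N0 by simp
    have q0: "Qf a 1 = 0" using z by blast
    have "T3f a n 1 + (Qf a 1)^2 / 2 = 0" using z unfolding S3_def by blast
    then have "T3f a n 1 = 0" using q0 by simp
    then have "2 / N^2 * ((a 0 / (2 * N + 1) + a 2 / (2 * N + 3) + a 4 / (2 * N + 5))
     - 2 * (a 0 / (N + 1) + a 2 / (N + 3) + a 4 / (N + 5)) + (a 0 + a 2 / 3 + a 4 / 5)) = 0"
      using T3f_1[OF ev n0, of a] unfolding N_def by simp
    then have c3: "a 0 / (2 * N + 1) + a 2 / (2 * N + 3) + a 4 / (2 * N + 5) = 0" using c1 c2 N0 by simp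
    have zz: "a 0 = 0 \<and> a 2 = 0 \<and> a 4 = 0" by (rule cauchy3[OF N0 c1 c2 c3])
    show "odd_poly f" unfolding odd_poly_def
    proof (intro allI impI)
      fix i :: nat assume "even i"
      show "coeff f i = 0"
      proof (cases "i \<le> 5")
        case True
        with \<open>even i\<close> have "i = 0 \<or> i = 2 \<or> i = 4" by presburger
        then show ?thesis using zz unfolding a_def by auto
      next
        case False
        then show ?thesis using assms(3) by (intro coeff_eq_0) simp
      qed
    qed
  next
    assume op: "odd_poly f"
    have og: "g (-t) = - g t" for t
    proof -
      have "odd (n - 1)" using n0 ev by simp
      then show ?thesis unfolding g_def by (simp add: power_minus_odd)
    qed
    have of: "ff (-t) = - ff t" for t unfolding ff_def by (rule odd_poly_neg[OF op])
    show "abel_center g ff" unfolding abel_center_def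
    proof (intro exI[of _ "1 / (64 * K)"] conjI allI impI)
      show "0 < 1 / (64 * K)" using Kpos by simp
    next
      fix x0 :: real assume x0: "\<bar>x0\<bar> < 1 / (64 * K)"
      show "\<exists>x. abel_solution g ff x \<and> x (-1) = x0"
        using abel_exists[OF cg cf K1 gK fK, of x0] x0 by auto
    next
      fix x0 :: real and x assume "\<bar>x0\<bar> < 1 / (64 * K)" and "abel_solution g ff x \<and> x (-1) = x0"
      then show "x 1 = x0" using center_suff[OF cg cf og of] by auto
    qed
  qed
qed

end
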